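(* Let $A$ be a finite alphabet and $n\ge1$. The $n$-ball subshift $\mathbb F^{[n]}\curvearrowright\mathcal C^{[n]}$ of the full convex shift $\mathbb F(A)\curvearrowright\mathcal C(A)$ is $1$-step (as a convex subshift over the alphabet $A^{[n]}$).
   Context: Convex subshifts. Let $A$ be a finite alphabet, $\mathbb F=\mathbb F(A)$. $\mathcal C=\mathcal C(A)$ is the set of subsets $\xi\subseteq\mathbb F$ with $1\in\xi$ that are right-convex: whenever a reduced word $a_m^{\varepsilon_m}\cdots a_1^{\varepsilon_1}$ ($a_i\in A$, $\varepsilon_i=\pm1$) lies in $\xi$, so does $a_k^{\varepsilon_k}\cdots a_1^{\varepsilon_1}$ for all $k<m$; topology from $\{0,1\}^{\mathbb F}$. Full convex shift: partial action of $\mathbb F$ on $\mathcal C$ with domains $\mathcal C_\alpha=\{\xi:\alpha^{-1}\in\xi\}$, $\alpha.\xi=\xi\alpha^{-1}$ for $\alpha\in\xi$. A convex subshift is the restriction to a closed invariant $\Omega\subseteq\mathcal C$. An $n$-ball is $B\in\mathcal C$ with all $|\alpha|\le n$, together with radius $n$; $\xi^n=\{\alpha\in\xi:|\alpha|\le n\}$; $\mathcal B_n(\Omega)=\{\xi^n:\xi\in\Omega\}$. For an $n$-ball $B$, $\xi\not\equiv B$ means $(\alpha.\xi)^n\ne B$ for all $\alpha\in\xi$; $\Omega^{\mathcal F}=\{\xi\in\mathcal C:\xi\not\equiv B\ \forall B\in\mathcal F\}$. $\Omega$ is $R$-step if $\Omega=\Omega^{\mathcal F}$ for a finite set $\mathcal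 F$ of $R$-balls (equivalently, $\xi\in\mathcal C$ lies in $\Omega$ iff $(\alpha.\xi)^R\in\mathcal B_R(\Omega)$ for all $\alpha\in\xi$). $n$-ball subshift: for a convex subshift $\Omega$, let $A^{[n:\Omega]}$ be the finite set of formal symbols $[(a.\xi)^n\xleftarrow{a}\xi^n]$ with $\xi\in\Omega$, $a\in A$, $a\in\xi$ (a symbol $[B\xleftarrow{a}B']$ is determined by the triple $(B,a,B')$), and set $[B'\xleftarrow{a^{-1}}B]:=[B\xleftarrow{a}B']^{-1}$ in the free group $\mathbb F^{[n:\Omega]}=\mathbb F(A^{[n:\Omega]})$. For $\xi\in\Omega$ and $\alpha=s_m\cdots s_1\in\xi$ reduced ($s_i\in A\cup A^{-1}$), put $B_k=((s_k\cdots s_1).\xi)^n$ and $\phi_n(\xi,\alpha)=[B_m\xleftarrow{s_m}B_{m-1}]\cdots[B_1\xleftarrow{s_1}B_0]$, $\phi_n(\xi,1)=1$, $\phi_n(\xi)=\{\phi_n(\xi,\alpha):\alpha\in\xi\}\in\mathcal C(A^{[n:\Omega]})$. The $n$-ball subshift $\theta^{[n]}$ is the restriction of the full convex shift on $A^{[n:\Omega]}$ to $\Omega^{[n]}:=\phi_n(\Omega)$ (a convex subshift). For $\Omega=\mathcal C$ write $A^{[n]}$, $\mathbb F^{[n]}$, $\mathcal C^{[n]}$. *)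

theory Defs
  imports Main
begin

text \<open>A generator occurrence is a pair
(a, e) with e = True for a and e = False for a^-1.  A group element is a reduced word,
stored as a list in WRITTEN order: the word a_m^{e_m} ... a_1^{e_1} is the list
[(a_m,e_m), ..., (a_1,e_1)].\<close>

type_synonym 'a gen = "'a \<times> bool"

definition ginv :: "'a gen \<Rightarrow> 'a gen" where
  "ginv s = (fst s, \<not> snd s)"

definition reduced :: "'a gen list \<Rightarrow> bool" where
  "reduced w \<longleftrightarrow> (\<forall>i. Suc i < length w \<longrightarrow> w ! Suc i \<noteq> ginv (w ! i))"

definition words :: "'a set \<Rightarrow> 'a gen list set" where
  "words A = {w. reduced w \<and> fst ` set w \<subseteq> A}"

fun reduce :: "'a gen list \<Rightarrow> 'a gen list" where
  "reduce [] = []"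
| "reduce (s # w) = (case reduce w of [] \<Rightarrow> [s]
      | t # r \<Rightarrow> (if t = ginv s then r else s # t # r))"

definition gmult :: "'a gen list \<Rightarrow> 'a gen list \<Rightarrow> 'a gen list" where
  "gmult x y = reduce (x @ y)"

definition ginverse :: "'a gen list \<Rightarrow> 'a gen list" where
  "ginverse w = rev (map ginv w)"

text \<open>Right-convex subsets: with written order, a_k^{e_k}...a_1^{e_1} is a drop of the list.\<close>
definition Cset :: "'a set \<Rightarrow> 'a gen list set set" where
  "Cset A = {\<xi>. \<xi> \<subseteq> words A \<and> [] \<in> \<xi> \<and> (\<forall>w\<in>\<xi>. \<forall>k. drop k w \<in> \<xi>)}"

text \<open>Partial action: alpha.xi = xi alpha^-1 (used for alpha \<in> xi).\<close>
definition act :: "'a gen list \<Rightarrow> 'a gen list set \<Rightarrow> 'a gen list set" where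
  "act \<alpha> \<xi> = (\<lambda>\<beta>. gmult \<beta> (ginverse \<alpha>)) ` \<xi>"

definition nball :: "nat \<Rightarrow> 'a gen list set \<Rightarrow> 'a gen list set" where
  "nball n \<xi> = {\<alpha>\<in>\<xi>. length \<alpha> \<le> n}"

definition avoiding :: "'a set \<Rightarrow> nat \<Rightarrow> 'a gen list set set \<Rightarrow> 'a gen list set set" where
  "avoiding A n F = {\<xi> \<in> Cset A. \<forall>B\<in>F. \<forall>\<alpha>\<in>\<xi>. nball n (act \<alpha> \<xi>) \<noteq> B}"

definition is_step :: "'a set \<Rightarrow> nat \<Rightarrow> 'a gen list set set \<Rightarrow> bool" where
  "is_step A R \<Omega> \<longleftrightarrow> (\<exists>F. finite F \<and> (\<forall>B\<in>F. B \<in> Cset A \<and> (\<forall>\<alpha>\<in>B. length \<alpha> \<le> R))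
      \<and> \<Omega> = avoiding A R F)"

text \<open>n-ball alphabet: symbol [B <-a- B'] is the triple (B, a, B').\<close>
type_synonym 'a sym = "'a gen list set \<times> 'a \<times> 'a gen list set"

definition ball_alph :: "nat \<Rightarrow> 'a set \<Rightarrow> 'a gen list set set \<Rightarrow> 'a sym set" where
  "ball_alph n A \<Omega> = {(nball n (act [(a, True)] \<xi>), a, nball n \<xi>) | \<xi> a.
      \<xi> \<in> \<Omega> \<and> a \<in> A \<and> [(a, True)] \<in> \<xi>}"

text \<open>[B_new <-s- B_old] as a generator of F(A^[n]); for s = a^-1 it is
[B_old <-a- B_new]^-1.\<close>
definition bsym :: "'a gen list set \<Rightarrow> 'a gen \<Rightarrow> 'a gen list set \<Rightarrow> 'a sym gen" where
  "bsym Bnew s Bold = (if snd s then ((Bnew, fst s, Bold), True) else ((Bold, fst s, Bnew), False))"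

fun phi :: "nat \<Rightarrow> 'a gen list set \<Rightarrow> 'a gen list \<Rightarrow> 'a sym gen list" where
  "phi n \<xi> [] = []"
| "phi n \<xi> (s # w) = bsym (nball n (act (s # w) \<xi>)) s (nball n (act w \<xi>)) # phi n \<xi> w"

definition phiset :: "nat \<Rightarrow> 'a gen list set \<Rightarrow> 'a sym gen list set" where
  "phiset n \<xi> = phi n \<xi> ` \<xi>"

end

theory Submission
  imports Defs
begin

lemma ginv_ginv[simp]: "ginv (ginv s) = s" by (cases s) (simp add: ginv_def)
lemma fst_ginv[simp]: "fst (ginv s) = fst s" by (simp add: ginv_def)
lemma snd_ginv[simp]: "snd (ginv s) = (\<not> snd s)" by (simp add: ginv_def)
lemma ginv_neq[simp]: "ginv s \<noteq> s" "s \<noteq> ginv s" by (cases s, simp add: ginv_def)+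
lemma ginv_inj[simp]: "(ginv s = ginv t) = (s = t)" by (metis ginv_ginv)

lemma reduced_Nil[simp]: "reduced []" by (simp add: reduced_def)
lemma reduced_single[simp]: "reduced [s]" by (simp add: reduced_def)
lemma reduced_Cons2: "reduced (s # t # r) \<longleftrightarrow> t \<noteq> ginv s \<and> reduced (t # r)"
  unfolding reduced_def
  apply (rule iffI)
   apply (intro conjI)
    apply (metis One_nat_def length_Cons nth_Cons_0 nth_Cons_Suc zero_less_Suc Suc_less_eq)
   apply (metis length_Cons nth_Cons_Suc Suc_less_eq)
  apply clarify
  subgoal for i by (cases i) auto
  done

lemma reduced_Cons: "reduced (s # w) \<longleftrightarrow> reduced w \<and> (w = [] \<or> hd w \<noteq> ginv s)"
  by (cases w) (auto simp: reduced_Cons2)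

lemma reduce_Cons: "reduce (s # w) = (if reduce w \<noteq> [] \<and> hd (reduce w) = ginv s then tl (reduce w) else s # reduce w)"
  by (cases "reduce w") auto

declare reduce.simps(2)[simp del]

lemma reduced_reduce[simp]: "reduced (reduce w)"
proof (induction w)
  case (Cons s w)
  then show ?case
    by (cases "reduce w") (auto simp: reduced_Cons reduce_Cons)
qed simp

lemma reduce_reduced: "reduced w \<Longrightarrow> reduce w = w"
  by (induction w) (auto simp: reduced_Cons reduce_Cons)

lemma reduce_idem[simp]: "reduce (reduce w) = reduce w"
  by (simp add: reduce_reduced)

lemma set_reduce: "set (reduce w) \<subseteq> set w"
proof (induction w)
  case (Cons s w)
  then show ?case
    by (cases "reduce w") (auto simp: reduce_Cons)
qed simp

lemma reduce_append_reduce: "reduce (x @ y) = reduce (x @ reduce y)"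
  by (induction x) (auto simp: reduce_Cons)

lemma reduce_cancel: "reduce (s # ginv s # w) = reduce w"
proof -
  have r: "reduced (reduce w)" by simp
  show ?thesis
  proof (cases "reduce w")
    case Nil
    then show ?thesis by (simp add: reduce_Cons)
  next
    case (Cons t r)
    show ?thesis
    proof (cases "t = s")
      case True
      with r Cons have "r = [] \<or> hd r \<noteq> ginv s" by (simp add: reduced_Cons)
      with Cons True show ?thesis by (auto simp: reduce_Cons)
    next
      case False
      with Cons show ?thesis by (auto simp: reduce_Cons)
    qed
  qed
qed

lemma reduce_cancel_mid: "reduce (x @ s # ginv s # y) = reduce (x @ y)"
  by (induction x) (simp add: reduce_cancel, simp add: reduce_Cons)

lemma reduce_reduce_append: "reduce (reduce x @ y) = reduce (x @ y)"
proof (induction x)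
  case (Cons s x)
  show ?case
  proof (cases "reduce x \<noteq> [] \<and> hd (reduce x) = ginv s")
    case True
    then obtain r where rx: "reduce x = ginv s # r" by (cases "reduce x") auto
    have "reduce ((s # x) @ y) = reduce ([s] @ reduce (x @ y))"
      by (metis append_Cons append_Nil reduce_append_reduce)
    also have "\<dots> = reduce ([s] @ reduce (ginv s # r @ y))" using Cons rx by simp
    also have "\<dots> = reduce (s # ginv s # r @ y)" by (metis append_Cons append_Nil reduce_append_reduce)
    also have "\<dots> = reduce (r @ y)" by (simp add: reduce_cancel)
    finally show ?thesis using rx by (simp add: reduce_Cons)
  next
    case False
    then have rx: "reduce (s # x) = s # reduce x" by (auto simp: reduce_Cons)
    have "reduce (s # reduce x @ y) = reduce ([s] @ reduce (reduce x @ y))"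
      by (metis append_Cons append_Nil reduce_append_reduce)
    also have "\<dots> = reduce ([s] @ reduce (x @ y))" using Cons by simp
    also have "\<dots> = reduce ((s # x) @ y)" by (metis append_Cons append_Nil reduce_append_reduce)
    finally show ?thesis using rx by simp
  qed
qed simp

lemma gmult_assoc: "gmult (gmult x y) z = gmult x (gmult y z)"
  unfolding gmult_def
  by (metis append_assoc reduce_append_reduce reduce_reduce_append)

lemma ginverse_Nil[simp]: "ginverse [] = []" by (simp add: ginverse_def)
lemma ginverse_Cons: "ginverse (s # x) = ginverse x @ [ginv s]" by (simp add: ginverse_def)
lemma ginverse_append: "ginverse (x @ y) = ginverse y @ ginverse x" by (simp add: ginverse_def)
lemma ginverse_ginverse[simp]: "ginverse (ginverse x) = x"
  by (simp add: ginverse_def rev_map comp_def)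
lemma length_ginverse[simp]: "length (ginverse x) = length x" by (simp add: ginverse_def)
lemma set_ginverse: "fst ` set (ginverse x) = fst ` set x"
  by (simp add: ginverse_def image_image)

lemma reduce_inv_cancel: "reduce (x @ ginverse x @ y) = reduce y"
proof (induction x arbitrary: y)
  case (Cons s x)
  have "reduce ((s # x) @ ginverse (s # x) @ y) = reduce ([s] @ (x @ ginverse x @ ginv s # y))"
    by (simp add: ginverse_Cons)
  also have "\<dots> = reduce ([s] @ reduce (x @ ginverse x @ ginv s # y))" by (rule reduce_append_reduce)
  also have "\<dots> = reduce ([s] @ reduce (ginv s # y))" using Cons by simp
  also have "\<dots> = reduce (s # ginv s # y)" by (metis append_Cons append_Nil reduce_append_reduce)
  finally show ?case by (simp add: reduce_cancel)
qed simp

lemma reduce_inv_cancel': "reduce (ginverse x @ x @ y) = reduce y"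
  using reduce_inv_cancel[of "ginverse x"] by simp

lemma reduce_inv_cancel_mid: "reduce (p @ x @ ginverse x @ y) = reduce (p @ y)"
  by (metis reduce_append_reduce reduce_inv_cancel)

lemma gmult_inv[simp]: "gmult x (ginverse x) = []"
  using reduce_inv_cancel[of x "[]"] by (simp add: gmult_def)
lemma gmult_inv'[simp]: "gmult (ginverse x) x = []"
  using reduce_inv_cancel'[of x "[]"] by (simp add: gmult_def)
lemma gmult_Nil_right: "reduced x \<Longrightarrow> gmult x [] = x" by (simp add: gmult_def reduce_reduced)
lemma gmult_Nil_left: "reduced x \<Longrightarrow> gmult [] x = x" by (simp add: gmult_def reduce_reduced)
lemma reduced_gmult[simp]: "reduced (gmult x y)" by (simp add: gmult_def)

lemma reduced_nth: "reduced w \<longleftrightarrow> (\<forall>i j. j < length w \<longrightarrow> j = Suc i \<longrightarrow> w ! j \<noteq> ginv (w ! i))"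
  by (auto simp: reduced_def)

lemma reduced_ginverse: "reduced x \<Longrightarrow> reduced (ginverse x)"
  unfolding reduced_def ginverse_def
proof (intro allI impI)
  fix i assume r: "\<forall>i. Suc i < length x \<longrightarrow> x ! Suc i \<noteq> ginv (x ! i)"
    and i: "Suc i < length (rev (map ginv x))"
  define j where "j = length x - Suc (Suc i)"
  have j: "Suc j < length x" "length x - Suc i = Suc j" using i by (auto simp: j_def)
  have "rev (map ginv x) ! Suc i = ginv (x ! j)" using i by (simp add: rev_nth j_def)
  moreover have "rev (map ginv x) ! i = ginv (x ! Suc j)" using i j by (simp add: rev_nth)
  ultimately show "rev (map ginv x) ! Suc i \<noteq> ginv (rev (map ginv x) ! i)"
    using r j by (metis ginv_ginv)
qed

lemma ginverse_reduce: "ginverse (reduce w) = reduce (ginverse w)"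
proof -
  let ?u = "reduce w" and ?v = "reduce (ginverse w)"
  have uv: "gmult ?u ?v = []"
    unfolding gmult_def
    by (metis append_Nil2 reduce.simps(1) reduce_append_reduce reduce_inv_cancel reduce_reduce_append)
  have "?v = gmult [] ?v" by (simp add: gmult_Nil_left)
  also have "\<dots> = gmult (gmult (ginverse ?u) ?u) ?v" by simp
  also have "\<dots> = gmult (ginverse ?u) (gmult ?u ?v)" by (rule gmult_assoc)
  also have "\<dots> = ginverse ?u" using uv by (simp add: gmult_Nil_right reduced_ginverse)
  finally show ?thesis by simp
qed

lemma ginverse_gmult: "ginverse (gmult x y) = gmult (ginverse y) (ginverse x)"
  by (simp add: gmult_def ginverse_reduce ginverse_append)

lemma reduced_drop: "reduced w \<Longrightarrow> reduced (drop k w)"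
  by (auto simp: reduced_def)

lemma reduced_appendD: "reduced (x @ y) \<Longrightarrow> reduced x"
  unfolding reduced_def by (metis Suc_lessD length_append nth_append trans_less_add1)

lemma gmult_single: "reduced b \<Longrightarrow> gmult [t] b = (if b \<noteq> [] \<and> hd b = ginv t then tl b else t # b)"
  by (simp add: gmult_def reduce_Cons reduce_reduced)

lemma gmult_decomp:
  assumes "reduced x" "reduced y"
  shows "\<exists>x1 d y2. x = x1 @ d \<and> y = ginverse d @ y2 \<and> gmult x y = x1 @ y2"
  using assms(1)
proof (induction x)
  case Nil
  then show ?case using assms(2) by (intro exI[of _ "[]"] exI[of _ y]) (auto simp: gmult_Nil_left)
next
  case (Cons s x)
  then have rx: "reduced x" by (simp add: reduced_Cons)
  from Cons.IH[OF rx] obtain x1 d y2 where h: "x = x1 @ d" "y = ginverse d @ y2" "gmult x y = x1 @ y2"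
    by blast
  have g: "gmult (s # x) y = (if x1 @ y2 \<noteq> [] \<and> hd (x1 @ y2) = ginv s then tl (x1 @ y2) else s # x1 @ y2)"
    using h(3) by (simp add: gmult_def reduce_Cons)
  show ?case
  proof (cases x1)
    case Nil
    show ?thesis
    proof (cases "y2 \<noteq> [] \<and> hd y2 = ginv s")
      case True
      then obtain y3 where "y2 = ginv s # y3" by (cases y2) auto
      then show ?thesis using g h Nil
        by (intro exI[of _ "[]"] exI[of _ "s # d"] exI[of _ y3]) (auto simp: ginverse_Cons)
    next
      case False
      then show ?thesis using g h Nil
        by (intro exI[of _ "[s]"] exI[of _ d] exI[of _ y2]) auto
    qed
  next
    case (Cons c x1')
    with Cons.prems h have "hd (x1 @ y2) \<noteq> ginv s" by (auto simp: reduced_Cons)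
    then show ?thesis using g h
      by (intro exI[of _ "s # x1"] exI[of _ d] exI[of _ y2]) auto
  qed
qed


lemma words_iff: "w \<in> words X \<longleftrightarrow> reduced w \<and> fst ` set w \<subseteq> X"
  by (simp add: words_def)

lemma CsetD:
  assumes "\<zeta> \<in> Cset X"
  shows "\<zeta> \<subseteq> words X" "[] \<in> \<zeta>" "\<And>w k. w \<in> \<zeta> \<Longrightarrow> drop k w \<in> \<zeta>"
    "\<And>w. w \<in> \<zeta> \<Longrightarrow> reduced w"
  using assms by (auto simp: Cset_def words_def)

lemma CsetI:
  assumes "\<zeta> \<subseteq> words X" "[] \<in> \<zeta>" "\<And>w k. w \<in> \<zeta> \<Longrightarrow> drop k w \<in> \<zeta>"
  shows "\<zeta> \<in> Cset X"
  using assms by (auto simp: Cset_def)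

lemma act_mem: "(\<And>b. b \<in> \<zeta> \<Longrightarrow> reduced b) \<Longrightarrow> reduced g \<Longrightarrow> g \<in> act a \<zeta> \<longleftrightarrow> gmult g a \<in> \<zeta>"
proof
  assume r: "\<And>b. b \<in> \<zeta> \<Longrightarrow> reduced b" and rg: "reduced g"
  { assume "g \<in> act a \<zeta>"
    then obtain b where b: "b \<in> \<zeta>" "g = gmult b (ginverse a)" by (auto simp: act_def)
    have "gmult g a = gmult b (gmult (ginverse a) a)" using b by (simp add: gmult_assoc)
    also have "\<dots> = b" using r[OF b(1)] by (simp add: gmult_Nil_right)
    finally show "gmult g a \<in> \<zeta>" using b by simp }
  { assume h: "gmult g a \<in> \<zeta>"
    have "gmult (gmult g a) (ginverse a) = g" using rg by (simp add: gmult_assoc gmult_Nil_right)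
    with h show "g \<in> act a \<zeta>" unfolding act_def by (metis image_eqI) }
qed

lemma act_act: "act g (act a \<zeta>) = act (gmult g a) \<zeta>"
  unfolding act_def image_image ginverse_gmult by (simp add: gmult_assoc)

lemma act_Nil: "(\<And>b. b \<in> \<zeta> \<Longrightarrow> reduced b) \<Longrightarrow> act [] \<zeta> = \<zeta>"
  unfolding act_def by (simp add: gmult_Nil_right)

lemma act_reduced: "b \<in> act a \<zeta> \<Longrightarrow> reduced b"
  by (auto simp: act_def)

lemma act_words:
  assumes "\<zeta> \<subseteq> words X" "fst ` set a \<subseteq> X"
  shows "act a \<zeta> \<subseteq> words X"
proof
  fix g assume "g \<in> act a \<zeta>"
  then obtain b where b: "b \<in> \<zeta>" "g = gmult b (ginverse a)" by (auto simp: act_def)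
  have "fst ` set g \<subseteq> fst ` set (b @ ginverse a)"
    using b(2) set_reduce[of "b @ ginverse a"] by (auto simp: gmult_def)
  also have "\<dots> \<subseteq> X" using assms b(1) by (auto simp: words_def ginverse_def)
  finally show "g \<in> words X" using b by (simp add: words_def)
qed

lemma act_Cset:
  assumes z: "\<zeta> \<in> Cset X" and a: "a \<in> \<zeta>"
  shows "act a \<zeta> \<in> Cset X"
proof (rule CsetI)
  show "act a \<zeta> \<subseteq> words X" using act_words[of \<zeta> X a] CsetD[OF z] a by (auto simp: words_def)
  show "[] \<in> act a \<zeta>" using a unfolding act_def by (metis gmult_inv image_eqI)
  fix g k assume "g \<in> act a \<zeta>"
  then obtain b where b: "b \<in> \<zeta>" "g = gmult b (ginverse a)" by (auto simp: act_def)
  have rb: "reduced b" and ra: "reduced a" using b a CsetD[OF z] by auto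
  obtain x1 d y2 where h: "b = x1 @ d" "ginverse a = ginverse d @ y2" "g = x1 @ y2"
    using gmult_decomp[OF rb reduced_ginverse[OF ra]] b(2) by blast
  have rg: "reduced g" using b by simp
  show "drop k g \<in> act a \<zeta>"
  proof (cases "k \<le> length x1")
    case True
    have "drop k b \<in> \<zeta>" using CsetD(3)[OF z b(1)] .
    moreover have "gmult (drop k b) (ginverse a) = drop k g"
    proof -
      have "gmult (drop k b) (ginverse a) = reduce (drop k x1 @ d @ ginverse d @ y2)"
        using True h by (simp add: gmult_def)
      also have "\<dots> = reduce (drop k x1 @ y2)" by (rule reduce_inv_cancel_mid)
      also have "\<dots> = drop k g" using True h reduced_drop[OF rg, of k] by (simp add: reduce_reduced)
      finally show ?thesis .
    qed
    ultimately show ?thesis unfolding act_def by (metis image_eqI)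
  next
    case False
    define m where "m = k - length x1"
    have dg: "drop k g = drop m y2" using False h by (simp add: m_def)
    have aeq: "a = ginverse (drop m y2) @ ginverse (take m y2) @ d"
    proof -
      have "a = ginverse (ginverse d @ y2)" using arg_cong[OF h(2), of ginverse] by simp
      also have "\<dots> = ginverse y2 @ d" by (simp add: ginverse_append)
      also have "ginverse y2 = ginverse (drop m y2) @ ginverse (take m y2)"
        by (metis append_take_drop_id ginverse_append)
      finally show ?thesis by simp
    qed
    have mem: "ginverse (take m y2) @ d \<in> \<zeta>"
    proof -
      have "drop (length (ginverse (drop m y2))) a = ginverse (take m y2) @ d"
        by (subst aeq) simp
      then show ?thesis using CsetD(3)[OF z a, of "length (ginverse (drop m y2))"] by simp
    qed
    have "gmult (ginverse (take m y2) @ d) (ginverse a)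
        = reduce (ginverse (take m y2) @ d @ ginverse d @ take m y2 @ drop m y2)"
      using h by (simp add: gmult_def)
    also have "\<dots> = reduce (ginverse (take m y2) @ take m y2 @ drop m y2)"
      by (rule reduce_inv_cancel_mid)
    also have "\<dots> = reduce (drop m y2)" by (rule reduce_inv_cancel')
    also have "\<dots> = drop k g" using dg reduced_drop[OF rg, of k] by (simp add: reduce_reduced)
    finally show ?thesis using mem unfolding act_def by (metis image_eqI)
  qed
qed

lemma rec_mem:
  assumes z: "\<zeta> \<in> Cset X" and r: "reduced (g @ [s])"
  shows "g @ [s] \<in> \<zeta> \<longleftrightarrow> [s] \<in> \<zeta> \<and> g \<in> act [s] \<zeta>"
proof -
  have rg: "reduced g" using reduced_appendD[OF r] .
  have "gmult g [s] = g @ [s]" using r by (simp add: gmult_def reduce_reduced)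
  moreover have "g \<in> act [s] \<zeta> \<longleftrightarrow> gmult g [s] \<in> \<zeta>" using act_mem[of \<zeta> g "[s]"] CsetD(4)[OF z] rg by blast
  ultimately have "g \<in> act [s] \<zeta> \<longleftrightarrow> g @ [s] \<in> \<zeta>" by simp
  moreover have "g @ [s] \<in> \<zeta> \<Longrightarrow> [s] \<in> \<zeta>" using CsetD(3)[OF z, of "g @ [s]" "length g"] by simp
  ultimately show ?thesis by blast
qed

lemma nball_nball: "k \<le> n \<Longrightarrow> nball k (nball n X) = nball k X"
  by (auto simp: nball_def)

lemma nball_0: "[] \<in> X \<Longrightarrow> nball 0 X = {[]}"
  by (auto simp: nball_def)

lemma nball_Cset: "\<zeta> \<in> Cset X \<Longrightarrow> nball k \<zeta> \<in> Cset X"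
  unfolding nball_def apply (rule CsetI) using CsetD[of \<zeta> X] by auto


definition proj :: "'a sym gen \<Rightarrow> 'a gen" where "proj t = (fst (snd (fst t)), snd t)"

lemma proj_bsym[simp]: "proj (bsym X s Y) = s" by (cases s) (auto simp: proj_def bsym_def)
lemma ginv_bsym: "ginv (bsym X s Y) = bsym Y (ginv s) X" by (cases s) (auto simp: bsym_def ginv_def)
lemma bsym_inj: "bsym X s Y = bsym X' s' Y' \<longleftrightarrow> X = X' \<and> s = s' \<and> Y = Y'"
  by (cases s; cases s') (auto simp: bsym_def split: if_splits)
lemma proj_ginv: "proj (ginv t) = ginv (proj t)" by (simp add: proj_def ginv_def)

lemma map_proj_phi[simp]: "map proj (phi n \<zeta> w) = w" by (induction w) auto
lemma length_phi[simp]: "length (phi n \<zeta> w) = length w" by (induction w) auto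
lemma phi_inj: "phi n \<zeta> v = phi n \<zeta> w \<Longrightarrow> v = w" by (metis map_proj_phi)
lemma drop_phi: "drop k (phi n \<zeta> w) = phi n \<zeta> (drop k w)"
  by (induction w arbitrary: k) (auto simp: drop_Cons split: nat.split)
lemma hd_phi_proj: "w \<noteq> [] \<Longrightarrow> proj (hd (phi n \<zeta> w)) = hd w" by (cases w) auto

lemma reduced_phi: "reduced w \<Longrightarrow> reduced (phi n \<zeta> w)"
proof (induction w)
  case (Cons s w)
  then have rw: "reduced w" and h: "w = [] \<or> hd w \<noteq> ginv s" by (auto simp: reduced_Cons)
  have "phi n \<zeta> w = [] \<or> hd (phi n \<zeta> w) \<noteq> ginv (bsym (nball n (act (s # w) \<zeta>)) s (nball n (act w \<zeta>)))"
    using h hd_phi_proj[of w n \<zeta>] by (metis ginv_bsym length_0_conv length_phi proj_bsym)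
  then show ?case using Cons.IH[OF rw] by (simp add: reduced_Cons)
qed simp

abbreviation Alph :: "nat \<Rightarrow> 'a set \<Rightarrow> 'a sym set" where
  "Alph n A \<equiv> ball_alph n A (Cset A)"

lemma sym_mem:
  assumes z: "\<zeta> \<in> Cset A" and w: "w \<in> \<zeta>" and s: "[s] \<in> act w \<zeta>"
  shows "fst (bsym (nball n (act (gmult [s] w) \<zeta>)) s (nball n (act w \<zeta>))) \<in> Alph n A"
proof -
  define Z where "Z = act w \<zeta>"
  have Z: "Z \<in> Cset A" using act_Cset[OF z w] by (simp add: Z_def)
  have sZ: "[s] \<in> Z" using s by (simp add: Z_def)
  have eq: "act (gmult [s] w) \<zeta> = act [s] Z" by (simp add: Z_def act_act)
  have aA: "fst s \<in> A" using CsetD(1)[OF Z] sZ by (auto simp: words_def)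
  show ?thesis
  proof (cases "snd s")
    case True
    then have "s = (fst s, True)" by (cases s) auto
    then show ?thesis unfolding eq Z_def[symmetric] ball_alph_def bsym_def using True Z sZ aA
      by (intro CollectI exI[of _ Z] exI[of _ "fst s"]) auto
  next
    case False
    then have s': "s = (fst s, False)" by (cases s) auto
    have Z2: "act [s] Z \<in> Cset A" using act_Cset[OF Z sZ] .
    have r: "\<And>b. b \<in> Z \<Longrightarrow> reduced b" using CsetD(4)[OF Z] .
    have g: "gmult [ginv s] [s] = []" by (simp add: gmult_def reduce_Cons)
    have m: "[ginv s] \<in> act [s] Z"
      using act_mem[of Z "[ginv s]" "[s]"] r g CsetD(2)[OF Z] by simp
    have bk: "act [ginv s] (act [s] Z) = Z" using act_act[of "[ginv s]" "[s]" Z] g act_Nil[OF r] by simp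
    have gs: "ginv s = (fst s, True)" using False by (cases s) (simp add: ginv_def)
    show ?thesis unfolding eq Z_def[symmetric] ball_alph_def bsym_def using False Z2 m bk gs aA
      by (intro CollectI exI[of _ "act [s] Z"] exI[of _ "fst s"]) auto
  qed
qed

lemma phi_syms:
  assumes z: "\<zeta> \<in> Cset A"
  shows "w \<in> \<zeta> \<Longrightarrow> fst ` set (phi n \<zeta> w) \<subseteq> Alph n A"
proof (induction w)
  case (Cons s w)
  have w: "w \<in> \<zeta>" using CsetD(3)[OF z Cons.prems, of 1] by simp
  have r: "reduced (s # w)" using CsetD(4)[OF z Cons.prems] .
  have g: "gmult [s] w = s # w" using r by (auto simp: gmult_single reduced_Cons)
  have "[s] \<in> act w \<zeta>" using act_mem[of \<zeta> "[s]" w] CsetD(4)[OF z] g Cons.prems by simp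
  from sym_mem[OF z w this, of n] g Cons.IH[OF w] show ?case by simp
qed simp

lemma phiset_Cset:
  assumes z: "\<zeta> \<in> Cset A"
  shows "phiset n \<zeta> \<in> Cset (Alph n A)"
proof (rule CsetI)
  show "phiset n \<zeta> \<subseteq> words (Alph n A)"
  proof
    fix x assume "x \<in> phiset n \<zeta>"
    then obtain w where w: "w \<in> \<zeta>" "x = phi n \<zeta> w" by (auto simp: phiset_def)
    show "x \<in> words (Alph n A)" using phi_syms[OF z w(1), of n] reduced_phi[OF CsetD(4)[OF z w(1)], of n \<zeta>] w
      by (simp add: words_def)
  qed
  show "[] \<in> phiset n \<zeta>" using CsetD(2)[OF z] unfolding phiset_def by (metis phi.simps(1) image_eqI)
  fix w k assume "w \<in> phiset n \<zeta>"
  then show "drop k w \<in> phiset n \<zeta>" using CsetD(3)[OF z] by (auto simp: phiset_def drop_phi)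
qed

lemma phi_edge:
  assumes z: "\<zeta> \<in> Cset A" and w: "w \<in> \<zeta>" and s: "[s] \<in> act w \<zeta>"
  shows "gmult [bsym (nball n (act (gmult [s] w) \<zeta>)) s (nball n (act w \<zeta>))] (phi n \<zeta> w)
     = phi n \<zeta> (gmult [s] w)"
proof -
  have rw: "reduced w" using CsetD(4)[OF z w] .
  have rp: "reduced (phi n \<zeta> w)" using reduced_phi[OF rw] .
  show ?thesis
  proof (cases "w \<noteq> [] \<and> hd w = ginv s")
    case True
    then obtain w' where w': "w = ginv s # w'" by (cases w) auto
    have g: "gmult [s] w = w'" using rw w' by (simp add: gmult_single)
    show ?thesis using rp unfolding g by (simp add: w' gmult_single ginv_bsym)
  next
    case False
    have g: "gmult [s] w = s # w" using rw False by (auto simp: gmult_single)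
    have "phi n \<zeta> w = [] \<or> hd (phi n \<zeta> w) \<noteq> ginv (bsym (nball n (act (s # w) \<zeta>)) s (nball n (act w \<zeta>)))"
      using False hd_phi_proj[of w n \<zeta>] by (metis ginv_bsym length_0_conv length_phi proj_bsym)
    then show ?thesis using rp unfolding g by (auto simp: gmult_single)
  qed
qed

lemma phi_edge_inv:
  assumes z: "\<zeta> \<in> Cset A" and w: "w \<in> \<zeta>" and m: "gmult [t] (phi n \<zeta> w) \<in> phiset n \<zeta>"
  shows "\<exists>s. [s] \<in> act w \<zeta> \<and> t = bsym (nball n (act (gmult [s] w) \<zeta>)) s (nball n (act w \<zeta>))"
proof -
  have rw: "reduced w" using CsetD(4)[OF z w] .
  have rp: "reduced (phi n \<zeta> w)" using reduced_phi[OF rw] .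
  have r: "\<And>b. b \<in> \<zeta> \<Longrightarrow> reduced b" using CsetD(4)[OF z] .
  show ?thesis
  proof (cases "phi n \<zeta> w \<noteq> [] \<and> hd (phi n \<zeta> w) = ginv t")
    case True
    then obtain s0 w' where w': "w = s0 # w'" by (cases w) auto
    have t: "t = bsym (nball n (act w' \<zeta>)) (ginv s0) (nball n (act w \<zeta>))"
      using True w' by (metis ginv_bsym ginv_ginv list.sel(1) phi.simps(2))
    have g: "gmult [ginv s0] w = w'" using rw w' by (simp add: gmult_single)
    have "w' \<in> \<zeta>" using CsetD(3)[OF z w, of 1] w' by simp
    then have "[ginv s0] \<in> act w \<zeta>" using act_mem[of \<zeta> "[ginv s0]" w, OF r] g by simp
    then show ?thesis using t g by blast
  next
    case False
    then have g1: "gmult [t] (phi n \<zeta> w) = t # phi n \<zeta> w" using rp by (auto simp: gmult_single)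
    from m obtain v where v: "v \<in> \<zeta>" "phi n \<zeta> v = t # phi n \<zeta> w" by (auto simp: phiset_def g1)
    then obtain s v' where sv: "v = s # v'" by (cases v) auto
    have "v' = w" using v sv phi_inj by auto
    then have sv: "v = s # w" using sv by simp
    have t: "t = bsym (nball n (act (s # w) \<zeta>)) s (nball n (act w \<zeta>))" using v sv by simp
    have "reduced (s # w)" using r v sv by simp
    then have g: "gmult [s] w = s # w" by (auto simp: gmult_single reduced_Cons)
    then have "[s] \<in> act w \<zeta>" using act_mem[of \<zeta> "[s]" w, OF r] v sv by simp
    then show ?thesis using t g by (intro exI[of _ s]) simp
  qed
qed

definition good :: "nat \<Rightarrow> 'a set \<Rightarrow> 'a sym gen list set \<Rightarrow> bool" where
  "good n A \<eta> \<longleftrightarrow> \<eta> \<in> Cset (Alph n A) \<and>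
     (\<forall>\<alpha>\<in>\<eta>. \<exists>\<zeta>\<in>Cset A. nball 1 (act \<alpha> \<eta>) = nball 1 (phiset n \<zeta>))"

lemma nball1_eq:
  assumes "[] \<in> X" "[] \<in> Y" "\<And>t. [t] \<in> X \<longleftrightarrow> [t] \<in> Y"
  shows "nball 1 X = nball 1 Y"
proof -
  have "\<And>x. length x \<le> 1 \<Longrightarrow> x = [] \<or> (\<exists>t. x = [t])"
    by (metis le_SucE le_zero_eq length_0_conv length_Suc_conv One_nat_def)
  then show ?thesis using assms unfolding nball_def by blast
qed

lemma Omega_good:
  assumes z: "\<zeta> \<in> Cset A"
  shows "good n A (phiset n \<zeta>)"
  unfolding good_def
proof (intro conjI ballI)
  let ?\<eta> = "phiset n \<zeta>"
  show eC: "?\<eta> \<in> Cset (Alph n A)" by (rule phiset_Cset[OF z])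
  fix \<alpha> assume a: "\<alpha> \<in> ?\<eta>"
  then obtain w where w: "w \<in> \<zeta>" "\<alpha> = phi n \<zeta> w" by (auto simp: phiset_def)
  define \<zeta>' where "\<zeta>' = act w \<zeta>"
  have z': "\<zeta>' \<in> Cset A" using act_Cset[OF z w(1)] by (simp add: \<zeta>'_def)
  have r: "\<And>b. b \<in> \<zeta> \<Longrightarrow> reduced b" using CsetD(4)[OF z] .
  have r': "\<And>b. b \<in> \<zeta>' \<Longrightarrow> reduced b" using CsetD(4)[OF z'] .
  have re: "\<And>b. b \<in> ?\<eta> \<Longrightarrow> reduced b" using CsetD(4)[OF eC] .
  have "nball 1 (act \<alpha> ?\<eta>) = nball 1 (phiset n \<zeta>')"
  proof (rule nball1_eq)
    show "[] \<in> act \<alpha> ?\<eta>" using CsetD(2)[OF act_Cset[OF eC a]] .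
    show "[] \<in> phiset n \<zeta>'" using CsetD(2)[OF z'] unfolding phiset_def
      by (metis phi.simps(1) image_eqI)
    fix t
    have A: "[t] \<in> act \<alpha> ?\<eta> \<longleftrightarrow> gmult [t] (phi n \<zeta> w) \<in> ?\<eta>"
      using act_mem[of ?\<eta> "[t]" \<alpha>, OF re] w by simp
    have B: "[t] \<in> phiset n \<zeta>' \<longleftrightarrow>
        (\<exists>s. [s] \<in> act w \<zeta> \<and> t = bsym (nball n (act (gmult [s] w) \<zeta>)) s (nball n (act w \<zeta>)))"
    proof
      assume "[t] \<in> phiset n \<zeta>'"
      then obtain v where v: "v \<in> \<zeta>'" "phi n \<zeta>' v = [t]" by (auto simp: phiset_def)
      have "length v = 1" using arg_cong[OF v(2), of length] by simp
      then obtain s where vs: "v = [s]" by (metis One_nat_def length_0_conv length_Suc_conv)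
      have "t = bsym (nball n (act [s] \<zeta>')) s (nball n (act [] \<zeta>'))" using v vs by simp
      then show "\<exists>s. [s] \<in> act w \<zeta> \<and> t = bsym (nball n (act (gmult [s] w) \<zeta>)) s (nball n (act w \<zeta>))"
        using v vs act_Nil[OF r'] CsetD(4)[OF z w(1)] by (intro exI[of _ s]) (simp add: \<zeta>'_def act_act gmult_Nil_left)
    next
      assume "\<exists>s. [s] \<in> act w \<zeta> \<and> t = bsym (nball n (act (gmult [s] w) \<zeta>)) s (nball n (act w \<zeta>))"
      then obtain s where s: "[s] \<in> \<zeta>'" "t = bsym (nball n (act [s] \<zeta>')) s (nball n \<zeta>')"
        using act_Nil[OF r'] by (auto simp: \<zeta>'_def act_act)
      then have "phi n \<zeta>' [s] = [t]" using act_Nil[OF r'] by simp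
      then show "[t] \<in> phiset n \<zeta>'" using s unfolding phiset_def by (metis image_eqI)
    qed
    show "[t] \<in> act \<alpha> ?\<eta> \<longleftrightarrow> [t] \<in> phiset n \<zeta>'"
      unfolding A B
    proof
      assume "gmult [t] (phi n \<zeta> w) \<in> ?\<eta>"
      from phi_edge_inv[OF z w(1) this] show "\<exists>s. [s] \<in> act w \<zeta> \<and> t = bsym (nball n (act (gmult [s] w) \<zeta>)) s (nball n (act w \<zeta>))" .
    next
      assume "\<exists>s. [s] \<in> act w \<zeta> \<and> t = bsym (nball n (act (gmult [s] w) \<zeta>)) s (nball n (act w \<zeta>))"
      then obtain s where s: "[s] \<in> act w \<zeta>" "t = bsym (nball n (act (gmult [s] w) \<zeta>)) s (nball n (act w \<zeta>))" by blast
      have "gmult [s] w \<in> \<zeta>" using s(1) act_mem[of \<zeta> "[s]" w, OF r] by simp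
      then show "gmult [t] (phi n \<zeta> w) \<in> ?\<eta>" using phi_edge[OF z w(1) s(1), of n] s(2)
        unfolding phiset_def by (metis image_eqI)
    qed
  qed
  then show "\<exists>\<zeta>\<in>Cset A. nball 1 (act \<alpha> ?\<eta>) = nball 1 (phiset n \<zeta>)" using z' by blast
qed


lemma len1_cases: "length x \<le> 1 \<Longrightarrow> x = [] \<or> (\<exists>t. x = [t])"
  by (metis le_SucE le_zero_eq length_0_conv length_Suc_conv One_nat_def)

context
  fixes n :: nat and A :: "'a set" and \<eta> :: "'a sym gen list set"
  assumes gd: "good n A \<eta>"
begin

lemma eC: "\<eta> \<in> Cset (Alph n A)" using gd by (simp add: good_def)
lemma re: "b \<in> \<eta> \<Longrightarrow> reduced b" using CsetD(4)[OF eC] .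
lemma loc: "\<beta> \<in> \<eta> \<Longrightarrow> \<exists>\<zeta>\<in>Cset A. nball 1 (act \<beta> \<eta>) = nball 1 (phiset n \<zeta>)"
  using gd by (simp add: good_def)

lemma E1:
  assumes z: "\<zeta> \<in> Cset A" and L: "nball 1 (act \<beta> \<eta>) = nball 1 (phiset n \<zeta>)"
    and t: "[t] \<in> act \<beta> \<eta>"
  shows "[proj t] \<in> \<zeta> \<and> t = bsym (nball n (act [proj t] \<zeta>)) (proj t) (nball n \<zeta>)"
proof -
  have "[t] \<in> nball 1 (act \<beta> \<eta>)" using t by (simp add: nball_def)
  then have "[t] \<in> nball 1 (phiset n \<zeta>)" using L by simp
  then have "[t] \<in> phiset n \<zeta>" by (simp add: nball_def)
  then obtain v where v: "v \<in> \<zeta>" "phi n \<zeta> v = [t]" by (auto simp: phiset_def)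
  have "length v = 1" using arg_cong[OF v(2), of length] by simp
  then obtain s where vs: "v = [s]" by (metis One_nat_def length_0_conv length_Suc_conv)
  have "t = bsym (nball n (act [s] \<zeta>)) s (nball n (act [] \<zeta>))" using v vs by simp
  then show ?thesis using act_Nil[OF CsetD(4)[OF z]] v vs by simp
qed

lemma E1':
  assumes z: "\<zeta> \<in> Cset A" and L: "nball 1 (act \<beta> \<eta>) = nball 1 (phiset n \<zeta>)"
    and s: "[s] \<in> \<zeta>"
  shows "[bsym (nball n (act [s] \<zeta>)) s (nball n \<zeta>)] \<in> act \<beta> \<eta>"
proof -
  have "phi n \<zeta> [s] = [bsym (nball n (act [s] \<zeta>)) s (nball n \<zeta>)]"
    using act_Nil[OF CsetD(4)[OF z]] by simp
  then have "[bsym (nball n (act [s] \<zeta>)) s (nball n \<zeta>)] \<in> nball 1 (phiset n \<zeta>)"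
    using s unfolding phiset_def nball_def by (metis (mono_tags, lifting) image_eqI length_phi
        One_nat_def le_refl length_Cons list.size(3) mem_Collect_eq)
  then have "[bsym (nball n (act [s] \<zeta>)) s (nball n \<zeta>)] \<in> nball 1 (act \<beta> \<eta>)" using L by simp
  then show ?thesis by (simp add: nball_def)
qed

lemma LU:
  assumes b: "\<beta> \<in> \<eta>" and t1: "[t1] \<in> act \<beta> \<eta>" and t2: "[t2] \<in> act \<beta> \<eta>"
    and p: "proj t1 = proj t2"
  shows "t1 = t2"
proof -
  obtain \<zeta> where z: "\<zeta> \<in> Cset A" "nball 1 (act \<beta> \<eta>) = nball 1 (phiset n \<zeta>)" using loc[OF b] by blast
  show ?thesis using E1[OF z t1] E1[OF z t2] p by metis
qed

lemma edge_fwd: "t # \<beta> \<in> \<eta> \<Longrightarrow> [t] \<in> act \<beta> \<eta>"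
proof -
  assume h: "t # \<beta> \<in> \<eta>"
  have r: "reduced (t # \<beta>)" using re[OF h] .
  then have "gmult [t] \<beta> = t # \<beta>" by (auto simp: gmult_single reduced_Cons)
  then show ?thesis using act_mem[of \<eta> "[t]" \<beta>, OF re] h by simp
qed

lemma edge_back: "t # \<beta> \<in> \<eta> \<Longrightarrow> [ginv t] \<in> act (t # \<beta>) \<eta>"
proof -
  assume h: "t # \<beta> \<in> \<eta>"
  have r: "reduced (t # \<beta>)" using re[OF h] .
  then have "gmult [ginv t] (t # \<beta>) = \<beta>" by (simp add: gmult_single)
  moreover have "\<beta> \<in> \<eta>" using CsetD(3)[OF eC h, of 1] by simp
  ultimately show ?thesis using act_mem[of \<eta> "[ginv t]" "t # \<beta>", OF re] by simp
qed

lemma nbr: "[t] \<in> act \<beta> \<eta> \<Longrightarrow> gmult [t] \<beta> \<in> \<eta>"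
  using act_mem[of \<eta> "[t]" \<beta>, OF re] by simp

lemma back_nbr: "[t] \<in> act \<beta> \<eta> \<Longrightarrow> \<beta> \<in> \<eta> \<Longrightarrow> [ginv t] \<in> act (gmult [t] \<beta>) \<eta>"
proof -
  assume "[t] \<in> act \<beta> \<eta>" "\<beta> \<in> \<eta>"
  have g: "gmult [ginv t] [t] = []" by (simp add: gmult_def reduce_Cons)
  have "gmult [ginv t] (gmult [t] \<beta>) = \<beta>"
    by (simp add: gmult_assoc[symmetric] g gmult_Nil_left re[OF \<open>\<beta> \<in> \<eta>\<close>])
  then show ?thesis using act_mem[of \<eta> "[ginv t]" "gmult [t] \<beta>", OF re] \<open>\<beta> \<in> \<eta>\<close> by simp
qed

lemma NB:
  assumes b: "\<beta> \<in> \<eta>" and t: "[t] \<in> act \<beta> \<eta>"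
    and z: "\<zeta> \<in> Cset A" "nball 1 (act \<beta> \<eta>) = nball 1 (phiset n \<zeta>)"
    and z1: "\<zeta>1 \<in> Cset A" "nball 1 (act (gmult [t] \<beta>) \<eta>) = nball 1 (phiset n \<zeta>1)"
  shows "nball n \<zeta>1 = nball n (act [proj t] \<zeta>)"
proof -
  have e1: "t = bsym (nball n (act [proj t] \<zeta>)) (proj t) (nball n \<zeta>)" using E1[OF z t] by simp
  have e2: "ginv t = bsym (nball n (act [proj (ginv t)] \<zeta>1)) (proj (ginv t)) (nball n \<zeta>1)"
    using E1[OF z1 back_nbr[OF t b]] by simp
  have "ginv t = bsym (nball n \<zeta>) (ginv (proj t)) (nball n (act [proj t] \<zeta>))"
    using arg_cong[OF e1, of ginv] by (simp add: ginv_bsym)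
  with e2 show ?thesis by (simp add: bsym_inj)
qed

lemma proj_reduced: "\<delta> \<in> \<eta> \<Longrightarrow> reduced (map proj \<delta>)"
proof (induction \<delta>)
  case (Cons t \<delta>')
  have d': "\<delta>' \<in> \<eta>" using CsetD(3)[OF eC Cons.prems, of 1] by simp
  have "\<delta>' = [] \<or> hd (map proj \<delta>') \<noteq> ginv (proj t)"
  proof (rule ccontr)
    assume "\<not> ?thesis"
    then obtain c r where cr: "\<delta>' = c # r" "proj c = ginv (proj t)" by (cases \<delta>') auto
    have "[t] \<in> act \<delta>' \<eta>" using edge_fwd[OF Cons.prems] .
    moreover have "[ginv c] \<in> act \<delta>' \<eta>" using edge_back d' cr by simp
    moreover have "proj (ginv c) = proj t" using cr by (simp add: proj_ginv)
    ultimately have "ginv c = t" using LU[OF d'] by blast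
    then have "c = ginv t" by auto
    then show False using re[OF Cons.prems] cr by (simp add: reduced_Cons)
  qed
  then show ?case using Cons.IH[OF d'] by (auto simp: reduced_Cons)
qed simp

lemma proj_inj: "\<delta> \<in> \<eta> \<Longrightarrow> \<beta> \<in> \<eta> \<Longrightarrow> map proj \<delta> = map proj \<beta> \<Longrightarrow> \<delta> = \<beta>"
proof (induction \<delta> arbitrary: \<beta>)
  case Nil
  then show ?case by simp
next
  case (Cons t \<delta>')
  then obtain t' \<beta>' where b: "\<beta> = t' # \<beta>'" by (cases \<beta>) auto
  have d': "\<delta>' \<in> \<eta>" using CsetD(3)[OF eC Cons.prems(1), of 1] by simp
  have b': "\<beta>' \<in> \<eta>" using CsetD(3)[OF eC Cons.prems(2), of 1] b by simp
  have "\<delta>' = \<beta>'" using Cons.IH[OF d' b'] Cons.prems b by simp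
  moreover have "t = t'"
    using LU[OF d' edge_fwd[OF Cons.prems(1)]] edge_fwd Cons.prems b \<open>\<delta>' = \<beta>'\<close> by auto
  ultimately show ?case using b by simp
qed

lemma xi_Cset: "map proj ` \<eta> \<in> Cset A"
proof (rule CsetI)
  show "map proj ` \<eta> \<subseteq> words A"
  proof
    fix x assume "x \<in> map proj ` \<eta>"
    then obtain \<delta> where d: "\<delta> \<in> \<eta>" "x = map proj \<delta>" by blast
    have "fst ` set \<delta> \<subseteq> Alph n A" using CsetD(1)[OF eC] d by (auto simp: words_def)
    then have "fst ` set x \<subseteq> A" using d
      by (auto simp: proj_def ball_alph_def)
    then show "x \<in> words A" using proj_reduced[OF d(1)] d by (simp add: words_def)
  qed
  show "[] \<in> map proj ` \<eta>" using CsetD(2)[OF eC] by force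
  fix w k assume "w \<in> map proj ` \<eta>"
  then show "drop k w \<in> map proj ` \<eta>" using CsetD(3)[OF eC] by (auto simp: drop_map)
qed

lemma EP:
  assumes b: "\<beta> \<in> \<eta>" and t: "[t] \<in> act \<beta> \<eta>"
  shows "gmult [proj t] (map proj \<beta>) = map proj (gmult [t] \<beta>)"
proof -
  have rb: "reduced \<beta>" using re[OF b] .
  have rp: "reduced (map proj \<beta>)" using proj_reduced[OF b] .
  have iff: "\<beta> \<noteq> [] \<Longrightarrow> hd \<beta> = ginv t \<longleftrightarrow> proj (hd \<beta>) = ginv (proj t)"
  proof
    assume "\<beta> \<noteq> []" "proj (hd \<beta>) = ginv (proj t)"
    then obtain c r where cr: "\<beta> = c # r" by (cases \<beta>) auto
    have "[ginv c] \<in> act \<beta> \<eta>" using edge_back b cr by simp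
    moreover have "proj (ginv c) = proj t" using cr \<open>proj (hd \<beta>) = ginv (proj t)\<close>
      by (simp add: proj_ginv)
    ultimately have "ginv c = t" using LU[OF b _ t] by blast
    then show "hd \<beta> = ginv t" using cr by auto
  qed (simp add: proj_ginv)
  show ?thesis using iff rb rp by (cases \<beta>) (auto simp: gmult_single)
qed

lemma EE:
  assumes b: "\<beta> \<in> \<eta>" and m: "gmult [s] (map proj \<beta>) \<in> map proj ` \<eta>"
  shows "\<exists>t. [t] \<in> act \<beta> \<eta> \<and> proj t = s"
proof (cases "\<beta> \<noteq> [] \<and> proj (hd \<beta>) = ginv s")
  case True
  then obtain c r where cr: "\<beta> = c # r" by (cases \<beta>) auto
  have "[ginv c] \<in> act \<beta> \<eta>" using edge_back b cr by simp
  moreover have "proj (ginv c) = s" using True cr by (simp add: proj_ginv)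
  ultimately show ?thesis by blast
next
  case False
  have rp: "reduced (map proj \<beta>)" using proj_reduced[OF b] .
  have g: "gmult [s] (map proj \<beta>) = s # map proj \<beta>"
    using False rp by (cases \<beta>) (auto simp: gmult_single)
  from m obtain \<delta> where d: "\<delta> \<in> \<eta>" "map proj \<delta> = s # map proj \<beta>" by (auto simp: g)
  then obtain t \<delta>' where td: "\<delta> = t # \<delta>'" by (cases \<delta>) auto
  have d': "\<delta>' \<in> \<eta>" using CsetD(3)[OF eC d(1), of 1] td by simp
  have "\<delta>' = \<beta>" using proj_inj[OF d' b] d td by simp
  then have "[t] \<in> act \<beta> \<eta>" using edge_fwd d td by simp
  moreover have "proj t = s" using d td by simp
  ultimately show ?thesis by blast
qed

lemma Mprime:
  "k \<le> n \<Longrightarrow> \<beta> \<in> \<eta> \<Longrightarrow> \<zeta> \<in> Cset A \<Longrightarrow> nball 1 (act \<beta> \<eta>) = nball 1 (phiset n \<zeta>)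
   \<Longrightarrow> nball k (act (map proj \<beta>) (map proj ` \<eta>)) = nball k \<zeta>"
proof (induction k arbitrary: \<beta> \<zeta>)
  case 0
  have "map proj \<beta> \<in> map proj ` \<eta>" using 0 by blast
  from act_Cset[OF xi_Cset this] have "[] \<in> act (map proj \<beta>) (map proj ` \<eta>)" by (rule CsetD)
  then show ?case using CsetD(2)[OF 0(3)] by (simp add: nball_0)
next
  case (Suc k)
  note b = Suc.prems(2) and z = Suc.prems(3) Suc.prems(4)
  define \<xi> where "\<xi> = map proj ` \<eta>"
  have xi: "\<xi> \<in> Cset A" using xi_Cset by (simp add: \<xi>_def)
  have pb: "map proj \<beta> \<in> \<xi>" using b by (simp add: \<xi>_def)
  define Z where "Z = act (map proj \<beta>) \<xi>"
  have Z: "Z \<in> Cset A" using act_Cset[OF xi pb] by (simp add: Z_def)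
  have edge: "[s] \<in> Z \<longleftrightarrow> [s] \<in> \<zeta>" for s
  proof
    assume "[s] \<in> Z"
    then have "gmult [s] (map proj \<beta>) \<in> \<xi>" using act_mem[of \<xi> "[s]" "map proj \<beta>", OF CsetD(4)[OF xi]]
      by (simp add: Z_def)
    then have "gmult [s] (map proj \<beta>) \<in> map proj ` \<eta>" by (simp add: \<xi>_def)
    with EE[OF b] obtain t where t: "[t] \<in> act \<beta> \<eta>" "proj t = s" by blast
    then show "[s] \<in> \<zeta>" using E1[OF z t(1)] by simp
  next
    assume s: "[s] \<in> \<zeta>"
    let ?t = "bsym (nball n (act [s] \<zeta>)) s (nball n \<zeta>)"
    have t: "[?t] \<in> act \<beta> \<eta>" using E1'[OF z s] .
    have "map proj (gmult [?t] \<beta>) \<in> \<xi>" using nbr[OF t] by (simp add: \<xi>_def)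
    then have "gmult [s] (map proj \<beta>) \<in> \<xi>" using EP[OF b t] by simp
    then show "[s] \<in> Z" using act_mem[of \<xi> "[s]" "map proj \<beta>", OF CsetD(4)[OF xi]]
      by (simp add: Z_def)
  qed
  have "w \<in> nball (Suc k) Z \<longleftrightarrow> w \<in> nball (Suc k) \<zeta>" for w
  proof (cases w rule: rev_exhaust)
    case Nil
    then show ?thesis using CsetD(2)[OF Z] CsetD(2)[OF z(1)] by (simp add: nball_def)
  next
    case (snoc g s)
    show ?thesis
    proof (cases "reduced w \<and> length g \<le> k")
      case False
      then show ?thesis using CsetD(4)[OF Z] CsetD(4)[OF z(1)] snoc by (auto simp: nball_def)
    next
      case True
      then have rw: "reduced (g @ [s])" and lg: "length g \<le> k" using snoc by auto
      have i1: "w \<in> Z \<longleftrightarrow> [s] \<in> Z \<and> g \<in> act [s] Z" using rec_mem[OF Z rw] snoc by simp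
      have i2: "w \<in> \<zeta> \<longleftrightarrow> [s] \<in> \<zeta> \<and> g \<in> act [s] \<zeta>" using rec_mem[OF z(1) rw] snoc by simp
      have "w \<in> Z \<longleftrightarrow> w \<in> \<zeta>"
      proof (cases "[s] \<in> \<zeta>")
        case False
        then show ?thesis using i1 i2 edge by blast
      next
        case True
        let ?t = "bsym (nball n (act [s] \<zeta>)) s (nball n \<zeta>)"
        have t: "[?t] \<in> act \<beta> \<eta>" using E1'[OF z True] .
        define \<beta>1 where "\<beta>1 = gmult [?t] \<beta>"
        have b1: "\<beta>1 \<in> \<eta>" using nbr[OF t] by (simp add: \<beta>1_def)
        obtain \<zeta>1 where z1: "\<zeta>1 \<in> Cset A" "nball 1 (act \<beta>1 \<eta>) = nball 1 (phiset n \<zeta>1)"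
          using loc[OF b1] by blast
        have nb: "nball n \<zeta>1 = nball n (act [s] \<zeta>)" using NB[OF b t z z1[unfolded \<beta>1_def]] by simp
        have "act [s] Z = act (map proj \<beta>1) \<xi>"
          using EP[OF b t] by (simp add: Z_def act_act \<beta>1_def)
        moreover have "nball k (act (map proj \<beta>1) \<xi>) = nball k \<zeta>1"
          using Suc.IH[OF _ b1 z1] Suc.prems(1) by (simp add: \<xi>_def)
        moreover have "nball k \<zeta>1 = nball k (act [s] \<zeta>)"
          using nball_nball[of k n \<zeta>1] nball_nball[of k n "act [s] \<zeta>"] nb Suc.prems(1) by simp
        ultimately have "nball k (act [s] Z) = nball k (act [s] \<zeta>)" by simp
        then have "g \<in> act [s] Z \<longleftrightarrow> g \<in> act [s] \<zeta>" using lg unfolding nball_def by blast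
        then show ?thesis using i1 i2 edge by blast
      qed
      then show ?thesis using snoc True by (simp add: nball_def)
    qed
  qed
  then show ?case by (auto simp: Z_def \<xi>_def)
qed

lemma PHI: "\<beta> \<in> \<eta> \<Longrightarrow> phi n (map proj ` \<eta>) (map proj \<beta>) = \<beta>"
proof (induction \<beta>)
  case (Cons t \<beta>')
  have b': "\<beta>' \<in> \<eta>" using CsetD(3)[OF eC Cons.prems, of 1] by simp
  have t: "[t] \<in> act \<beta>' \<eta>" using edge_fwd[OF Cons.prems] .
  have g: "gmult [t] \<beta>' = t # \<beta>'" using re[OF Cons.prems] by (auto simp: gmult_single reduced_Cons)
  obtain \<zeta>' where z: "\<zeta>' \<in> Cset A" "nball 1 (act \<beta>' \<eta>) = nball 1 (phiset n \<zeta>')"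
    using loc[OF b'] by blast
  obtain \<zeta>1 where z1: "\<zeta>1 \<in> Cset A" "nball 1 (act (t # \<beta>') \<eta>) = nball 1 (phiset n \<zeta>1)"
    using loc[OF Cons.prems] by blast
  have e: "t = bsym (nball n (act [proj t] \<zeta>')) (proj t) (nball n \<zeta>')" using E1[OF z t] by simp
  have nb: "nball n \<zeta>1 = nball n (act [proj t] \<zeta>')" using NB[OF b' t z] z1 g by simp
  have m1: "nball n (act (map proj \<beta>') (map proj ` \<eta>)) = nball n \<zeta>'" using Mprime[OF le_refl b' z] .
  have m2: "nball n (act (map proj (t # \<beta>')) (map proj ` \<eta>)) = nball n \<zeta>1"
    using Mprime[OF le_refl Cons.prems z1] .
  show ?case using Cons.IH[OF b'] m1 m2 nb e by simp
qed simp

lemma good_phiset: "\<eta> = phiset n (map proj ` \<eta>)"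
proof -
  have "phiset n (map proj ` \<eta>) = (\<lambda>\<beta>. phi n (map proj ` \<eta>) (map proj \<beta>)) ` \<eta>"
    by (simp add: phiset_def image_image)
  also have "\<dots> = \<eta>" using PHI by simp
  finally show ?thesis by simp
qed

end


lemma finite_short_lists: "finite X \<Longrightarrow> finite {w :: ('x \<times> bool) list. fst ` set w \<subseteq> X \<and> length w \<le> k}"
proof -
  assume X: "finite X"
  have "{w :: ('x \<times> bool) list. fst ` set w \<subseteq> X \<and> length w \<le> k} \<subseteq> {w. set w \<subseteq> X \<times> (UNIV :: bool set) \<and> length w \<le> k}"
    by auto
  moreover have "finite {w. set w \<subseteq> X \<times> (UNIV :: bool set) \<and> length w \<le> k}"
    by (rule finite_lists_length_le) (simp add: X)
  ultimately show ?thesis by (rule finite_subset)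
qed

lemma finite_Alph:
  assumes A: "finite A"
  shows "finite (Alph n A)"
proof -
  define S where "S = {w :: 'a gen list. fst ` set w \<subseteq> A \<and> length w \<le> n}"
  have fS: "finite S" using finite_short_lists[OF A] by (simp add: S_def)
  have "Alph n A \<subseteq> Pow S \<times> A \<times> Pow S"
  proof
    fix x assume "x \<in> Alph n A"
    then obtain \<xi> a where h: "x = (nball n (act [(a, True)] \<xi>), a, nball n \<xi>)" "\<xi> \<in> Cset A" "a \<in> A"
      unfolding ball_alph_def by blast
    have "act [(a, True)] \<xi> \<subseteq> words A" using act_words[OF CsetD(1)[OF h(2)]] h(3) by simp
    then show "x \<in> Pow S \<times> A \<times> Pow S" using h CsetD(1)[OF h(2)]
      by (auto simp: S_def nball_def words_def)
  qed
  moreover have "finite (Pow S \<times> A \<times> Pow S)" using fS A by simp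
  ultimately show ?thesis by (rule finite_subset)
qed

theorem lemma3:
  fixes A :: "'a set" and n :: nat
  assumes "finite A" and "n \<ge> 1"
  shows "is_step (ball_alph n A (Cset A)) 1 (phiset n ` Cset A)"
proof -
  let ?A' = "ball_alph n A (Cset A)"
  let ?\<Omega> = "phiset n ` Cset A"
  define F where "F = {B \<in> Cset ?A'. (\<forall>\<alpha>\<in>B. length \<alpha> \<le> 1) \<and> B \<notin> nball 1 ` ?\<Omega>}"
  have fA': "finite ?A'" using finite_Alph[OF assms(1)] .
  have "F \<subseteq> Pow {w :: 'a sym gen list. fst ` set w \<subseteq> ?A' \<and> length w \<le> 1}"
  proof
    fix B assume "B \<in> F"
    then have B: "B \<subseteq> words ?A'" "\<forall>\<alpha>\<in>B. length \<alpha> \<le> 1" unfolding F_def using CsetD(1) by auto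
    show "B \<in> Pow {w :: 'a sym gen list. fst ` set w \<subseteq> ?A' \<and> length w \<le> 1}"
    proof (rule PowI, rule subsetI)
      fix w assume "w \<in> B"
      then have "fst ` set w \<subseteq> ?A'" "length w \<le> 1" using B unfolding words_def by auto
      then show "w \<in> {w. fst ` set w \<subseteq> ?A' \<and> length w \<le> 1}" by simp
    qed
  qed
  moreover have "finite (Pow {w :: 'a sym gen list. fst ` set w \<subseteq> ?A' \<and> length w \<le> 1})"
    using finite_short_lists[OF fA', of 1] by simp
  ultimately have fF: "finite F" by (rule finite_subset)
  have FB: "\<forall>B\<in>F. B \<in> Cset ?A' \<and> (\<forall>\<alpha>\<in>B. length \<alpha> \<le> 1)" by (simp add: F_def)
  have eq: "?\<Omega> = avoiding ?A' 1 F"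
  proof
    show "?\<Omega> \<subseteq> avoiding ?A' 1 F"
    proof
      fix \<eta> assume "\<eta> \<in> ?\<Omega>"
      then obtain \<zeta> where z: "\<zeta> \<in> Cset A" "\<eta> = phiset n \<zeta>" by blast
      have g: "good n A \<eta>" using Omega_good[OF z(1)] z(2) by simp
      have "\<forall>B\<in>F. \<forall>\<alpha>\<in>\<eta>. nball 1 (act \<alpha> \<eta>) \<noteq> B"
      proof (intro ballI)
        fix B \<alpha> assume B: "B \<in> F" and a: "\<alpha> \<in> \<eta>"
        obtain \<zeta>' where "\<zeta>' \<in> Cset A" "nball 1 (act \<alpha> \<eta>) = nball 1 (phiset n \<zeta>')"
          using g a by (auto simp: good_def)
        then have "nball 1 (act \<alpha> \<eta>) \<in> nball 1 ` ?\<Omega>" by blast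
        then show "nball 1 (act \<alpha> \<eta>) \<noteq> B" using B by (auto simp: F_def)
      qed
      then show "\<eta> \<in> avoiding ?A' 1 F" using g by (simp add: avoiding_def good_def)
    qed
  next
    show "avoiding ?A' 1 F \<subseteq> ?\<Omega>"
    proof
      fix \<eta> assume h: "\<eta> \<in> avoiding ?A' 1 F"
      then have eC: "\<eta> \<in> Cset ?A'" and av: "\<forall>B\<in>F. \<forall>\<alpha>\<in>\<eta>. nball 1 (act \<alpha> \<eta>) \<noteq> B"
        by (auto simp: avoiding_def)
      have "\<forall>\<alpha>\<in>\<eta>. \<exists>\<zeta>\<in>Cset A. nball 1 (act \<alpha> \<eta>) = nball 1 (phiset n \<zeta>)"
      proof
        fix \<alpha> assume a: "\<alpha> \<in> \<eta>"
        have c1: "nball 1 (act \<alpha> \<eta>) \<in> Cset ?A'" using nball_Cset[OF act_Cset[OF eC a]] .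
        have c2: "\<forall>x\<in>nball 1 (act \<alpha> \<eta>). length x \<le> 1" by (simp add: nball_def)
        have "nball 1 (act \<alpha> \<eta>) \<in> nball 1 ` ?\<Omega>"
        proof (rule ccontr)
          assume "nball 1 (act \<alpha> \<eta>) \<notin> nball 1 ` ?\<Omega>"
          with c1 c2 have "nball 1 (act \<alpha> \<eta>) \<in> F" unfolding F_def by simp
          with av a show False by blast
        qed
        then show "\<exists>\<zeta>\<in>Cset A. nball 1 (act \<alpha> \<eta>) = nball 1 (phiset n \<zeta>)" by blast
      qed
      then have g: "good n A \<eta>" using eC by (simp add: good_def)
      show "\<eta> \<in> ?\<Omega>" using good_phiset[OF g] xi_Cset[OF g] by blast
    qed
  qed
  show ?thesis unfolding is_step_def using fF FB eq by blast
qed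

end
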